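(* Let $T$ be a spanning tree and $\tau=\sum_{(i,j)\in T}\frac{r(i,j)}{R(C(i,j))}$. For any probability distribution over $\mathbf x\in\mathbb R^V$ such that $\mathbb E_{\mathbf x}[\mathcal B(\mathbf x)]\ge(1-\frac\epsilon\tau)\mathcal B(\mathbf x^* )$, we have $\mathbb E_{\mathbf x}[\mathcal E(\mathbf f_{T,\mathbf x})]\le(1+\epsilon)\mathcal E(\mathbf f^* )$.
   Context: $G=(V,E)$ is a connected undirected graph with resistances $r(e)>0$ and fixed orientation $\vec E$; $\mathbf b\in\mathbb R^V$ with $\sum_ib(i)=0$; a $\mathbf b$-flow has net outflow $b(i)$ at every $i$ (with $f(j,i)=-f(i,j)$). $\mathcal E(\mathbf f)=\frac12\sum_er(e)f(e)^2$, $\mathbf f^*$ is the minimum-energy $\mathbf b$-flow; $\mathbf L=\sum_{ij\in E}\frac1{r(i,j)}(\mathbf e_i-\mathbf e_j)(\mathbf e_i-\mathbf e_j)^\top$, $\mathcal B(\mathbf x)=\mathbf b^\top\mathbf x-\frac12\mathbf x^\top\mathbf L\mathbf x$, and $\mathbf x^*$ maximizes $\mathcal B$. $T$ is rooted with edges directed toward the root; $C(i,j)$ is the vertex set of the component of $T-ij$ containing $i$; $R(C)=(\sum_{e\in\delta(C)}1/r(e))^{-1}$ where $\delta(C)$ is the set of edges with exactly one endpoint in $C$. The tree-defined flow $\mathbf f_{T,\mathbf x}$ equals $\frac{x(i)-x(j)}{r(i,j)}$ on non-tree edges and on tree edges takes the unique values making it a $\mathbf b$-flow. *)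

theory Defs
  imports "HOL-Analysis.Analysis" "HOL-Probability.Probability"
begin

text \<open>Vertices are the elements of a finite type 'v (so V = UNIV).  The graph is given by
a set E of oriented edges (the fixed orientation), each edge being a pair (i,j).\<close>

definition sym_rel :: "('v \<times> 'v) set \<Rightarrow> ('v \<times> 'v) set" where
  "sym_rel F = F \<union> F\<inverse>"

definition connected_graph :: "('v \<times> 'v) set \<Rightarrow> bool" where
  "connected_graph F \<longleftrightarrow> (\<forall>u v. (u, v) \<in> (sym_rel F)\<^sup>*)"

definition oriented_graph :: "('v \<times> 'v) set \<Rightarrow> bool" where
  "oriented_graph E \<longleftrightarrow> (\<forall>i j. (i, j) \<in> E \<longrightarrow> i \<noteq> j \<and> (j, i) \<notin> E)"

definition spanning_tree :: "('v \<times> 'v) set \<Rightarrow> ('v \<times> 'v) set \<Rightarrow> bool" where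
  "spanning_tree E T \<longleftrightarrow> T \<subseteq> E \<and> connected_graph T \<and>
     (\<forall>e\<in>T. \<not> connected_graph (T - {e}))"

text \<open>f is a b-flow: net outflow b(i) at every vertex i (f(j,i) = - f(i,j) implicit).\<close>
definition is_bflow :: "('v::finite \<times> 'v) set \<Rightarrow> real^'v \<Rightarrow> ('v \<times> 'v \<Rightarrow> real) \<Rightarrow> bool" where
  "is_bflow E b f \<longleftrightarrow>
     (\<forall>i. (\<Sum>j\<in>{j. (i, j) \<in> E}. f (i, j)) - (\<Sum>j\<in>{j. (j, i) \<in> E}. f (j, i)) = b $ i)"

definition energy :: "('v \<times> 'v) set \<Rightarrow> ('v \<times> 'v \<Rightarrow> real) \<Rightarrow> ('v \<times> 'v \<Rightarrow> real) \<Rightarrow> real" where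
  "energy E r f = (1/2) * (\<Sum>e\<in>E. r e * (f e)\<^sup>2)"

definition laplacian :: "('v::finite \<times> 'v) set \<Rightarrow> ('v \<times> 'v \<Rightarrow> real) \<Rightarrow> real^'v^'v" where
  "laplacian E r = (\<Sum>(i, j)\<in>E. (1 / r (i, j)) *\<^sub>R
      (\<chi> a c. (axis i 1 - axis j 1 :: real^'v) $ a * (axis i 1 - axis j 1 :: real^'v) $ c))"

definition dualB :: "('v::finite \<times> 'v) set \<Rightarrow> ('v \<times> 'v \<Rightarrow> real) \<Rightarrow> real^'v \<Rightarrow> real^'v \<Rightarrow> real" where
  "dualB E r b x = b \<bullet> x - (1/2) * (x \<bullet> (laplacian E r *v x))"

definition cut :: "('v \<times> 'v) set \<Rightarrow> 'v set \<Rightarrow> ('v \<times> 'v) set" where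
  "cut E C = {e \<in> E. (fst e \<in> C) \<noteq> (snd e \<in> C)}"

definition Rcut :: "('v \<times> 'v) set \<Rightarrow> ('v \<times> 'v \<Rightarrow> real) \<Rightarrow> 'v set \<Rightarrow> real" where
  "Rcut E r C = inverse (\<Sum>e\<in>cut E C. 1 / r e)"

definition compC :: "('v \<times> 'v) set \<Rightarrow> 'v \<times> 'v \<Rightarrow> 'v set" where
  "compC T e = {v. (fst e, v) \<in> (sym_rel (T - {e}))\<^sup>*}"

definition tau :: "('v \<times> 'v) set \<Rightarrow> ('v \<times> 'v \<Rightarrow> real) \<Rightarrow> ('v \<times> 'v) set \<Rightarrow> real" where
  "tau E r T = (\<Sum>e\<in>T. r e / Rcut E r (compC T e))"

definition tree_flow :: "('v::finite \<times> 'v) set \<Rightarrow> ('v \<times> 'v \<Rightarrow> real) \<Rightarrow> real^'v \<Rightarrow> ('v \<times> 'v) set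
     \<Rightarrow> real^'v \<Rightarrow> ('v \<times> 'v \<Rightarrow> real)" where
  "tree_flow E r b T x = (THE f. is_bflow E b f \<and>
      (\<forall>e\<in>E - T. f e = (x $ fst e - x $ snd e) / r e) \<and> (\<forall>e. e \<notin> E \<longrightarrow> f e = 0))"

end

theory Submission
  imports Defs
begin


definition net :: "('v \<times> 'v) set \<Rightarrow> ('v \<times> 'v \<Rightarrow> real) \<Rightarrow> 'v \<Rightarrow> real" where
  "net F f v = (\<Sum>j\<in>{j. (v, j) \<in> F}. f (v, j)) - (\<Sum>j\<in>{j. (j, v) \<in> F}. f (j, v))"

lemma bflow_net: "is_bflow E b f \<longleftrightarrow> (\<forall>i. net E f i = b $ i)"
  by (simp add: is_bflow_def net_def)

lemma sum_out:
  fixes F :: "('v::finite \<times> 'v) set"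
  shows "(\<Sum>v\<in>UNIV. \<Sum>j\<in>{j. (v, j) \<in> F}. G v j) = (\<Sum>e\<in>F. G (fst e) (snd e))"
proof -
  have "F = Sigma UNIV (\<lambda>v. {j. (v, j) \<in> F})" by auto
  then have "(\<Sum>e\<in>F. G (fst e) (snd e)) = (\<Sum>(v,j)\<in>Sigma UNIV (\<lambda>v. {j. (v, j) \<in> F}). G v j)"
    by (simp add: case_prod_beta')
  also have "\<dots> = (\<Sum>v\<in>UNIV. \<Sum>j\<in>{j. (v, j) \<in> F}. G v j)"
    by (rule sum.Sigma[symmetric]) auto
  finally show ?thesis by simp
qed

lemma sum_in:
  fixes F :: "('v::finite \<times> 'v) set"
  shows "(\<Sum>v\<in>UNIV. \<Sum>j\<in>{j. (j, v) \<in> F}. G j v) = (\<Sum>e\<in>F. G (fst e) (snd e))"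
proof -
  have "(\<Sum>v\<in>UNIV. \<Sum>j\<in>{j. (j, v) \<in> F}. G j v) = (\<Sum>v\<in>UNIV. \<Sum>j\<in>UNIV. if (j, v) \<in> F then G j v else 0)"
    by (simp add: sum.If_cases)
  also have "\<dots> = (\<Sum>j\<in>UNIV. \<Sum>v\<in>UNIV. if (j, v) \<in> F then G j v else 0)"
    by (rule sum.swap)
  also have "\<dots> = (\<Sum>j\<in>UNIV. \<Sum>v\<in>{v. (j, v) \<in> F}. G j v)"
    by (simp add: sum.If_cases)
  also have "\<dots> = (\<Sum>e\<in>F. G (fst e) (snd e))" by (rule sum_out)
  finally show ?thesis .
qed

lemma net_parts:
  fixes F :: "('v::finite \<times> 'v) set"
  shows "(\<Sum>v\<in>UNIV. w v * net F f v) = (\<Sum>e\<in>F. f e * (w (fst e) - w (snd e)))"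
proof -
  have "(\<Sum>v\<in>UNIV. w v * net F f v) = (\<Sum>v\<in>UNIV. \<Sum>j\<in>{j. (v, j) \<in> F}. w v * f (v, j))
     - (\<Sum>v\<in>UNIV. \<Sum>j\<in>{j. (j, v) \<in> F}. w v * f (j, v))"
    by (simp add: net_def right_diff_distrib sum_distrib_left sum_subtractf)
  also have "\<dots> = (\<Sum>e\<in>F. w (fst e) * f e) - (\<Sum>e\<in>F. w (snd e) * f e)"
    using sum_out[of "\<lambda>v j. w v * f (v, j)" F] sum_in[of "\<lambda>j v. w v * f (j, v)" F] by simp
  also have "\<dots> = (\<Sum>e\<in>F. f e * (w (fst e) - w (snd e)))"
    by (simp add: sum_subtractf[symmetric] algebra_simps)
  finally show ?thesis .
qed

lemma lap_form:
  fixes E :: "('v::finite \<times> 'v) set"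
  shows "x \<bullet> (laplacian E r *v y) = (\<Sum>e\<in>E. (x $ fst e - x $ snd e) * (y $ fst e - y $ snd e) / r e)"
proof -
  have comp: "laplacian E r $ a $ c = (\<Sum>e\<in>E. (1 / r e) * ((axis (fst e) 1 - axis (snd e) 1 :: real^'v) $ a * (axis (fst e) 1 - axis (snd e) 1 :: real^'v) $ c))" for a c
    unfolding laplacian_def by (simp add: case_prod_beta')
  have "x \<bullet> (laplacian E r *v y) = (\<Sum>a\<in>UNIV. x $ a * (\<Sum>c\<in>UNIV. laplacian E r $ a $ c * y $ c))"
    by (simp add: inner_vec_def matrix_vector_mult_def)
  also have "\<dots> = (\<Sum>a\<in>UNIV. \<Sum>c\<in>UNIV. \<Sum>e\<in>E. (1 / r e) * (x $ a * (axis (fst e) 1 - axis (snd e) 1 :: real^'v) $ a) * ((axis (fst e) 1 - axis (snd e) 1 :: real^'v) $ c * y $ c))"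
    by (simp add: comp sum_distrib_left sum_distrib_right mult.assoc mult.left_commute)
  also have "\<dots> = (\<Sum>e\<in>E. (1 / r e) * (\<Sum>a\<in>UNIV. x $ a * (axis (fst e) 1 - axis (snd e) 1 :: real^'v) $ a) * (\<Sum>c\<in>UNIV. (axis (fst e) 1 - axis (snd e) 1 :: real^'v) $ c * y $ c))"
    apply (simp add: sum_distrib_left sum_distrib_right sum.swap[where A=UNIV and B=E] sum.swap[where B=E] )
    apply (rule sum.cong[OF refl])
    apply (rule sum.swap)
    done
  also have "\<dots> = (\<Sum>e\<in>E. (1 / r e) * (x \<bullet> (axis (fst e) 1 - axis (snd e) 1)) * ((axis (fst e) 1 - axis (snd e) 1) \<bullet> y))"
    by (simp add: inner_vec_def mult.commute)
  also have "\<dots> = (\<Sum>e\<in>E. (x $ fst e - x $ snd e) * (y $ fst e - y $ snd e) / r e)"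
    by (simp add: inner_diff_right inner_diff_left inner_axis inner_axis')
  finally show ?thesis .
qed



lemma sym_rel_conv: "(sym_rel F)\<inverse> = sym_rel F"
  by (auto simp: sym_rel_def)

lemma rt_sym: "(a, c) \<in> (sym_rel F)\<^sup>* \<Longrightarrow> (c, a) \<in> (sym_rel F)\<^sup>*"
  using rtrancl_converseI[of a c "sym_rel F"] sym_rel_conv[of F] by simp

lemma compC_fst: "fst e \<in> compC T e"
  by (simp add: compC_def)

lemma compC_snd:
  assumes tree: "spanning_tree E T" and e: "e \<in> T"
  shows "snd e \<notin> compC T e"
proof
  assume "snd e \<in> compC T e"
  then have h: "(fst e, snd e) \<in> (sym_rel (T - {e}))\<^sup>*" by (simp add: compC_def)
  have "sym_rel T \<subseteq> (sym_rel (T - {e}))\<^sup>*"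
  proof
    fix p assume p: "p \<in> sym_rel T"
    obtain a c where pe: "p = (a, c)" by force
    show "p \<in> (sym_rel (T - {e}))\<^sup>*"
    proof (cases "(a, c) = e \<or> (c, a) = e")
      case True
      then show ?thesis using h rt_sym[OF h] pe by auto
    next
      case False
      then have "(a, c) \<in> sym_rel (T - {e})" using p pe by (auto simp: sym_rel_def)
      then show ?thesis using pe by auto
    qed
  qed
  then have "(sym_rel T)\<^sup>* \<subseteq> (sym_rel (T - {e}))\<^sup>*"
    by (rule rtrancl_subset_rtrancl)
  then have "connected_graph (T - {e})"
    using tree by (auto simp: spanning_tree_def connected_graph_def)
  then show False using tree e by (auto simp: spanning_tree_def)
qed

lemma compC_other:
  assumes "e' \<in> T" "e' \<noteq> e"
  shows "fst e' \<in> compC T e \<longleftrightarrow> snd e' \<in> compC T e"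
proof -
  have 1: "(fst e', snd e') \<in> sym_rel (T - {e})" and 2: "(snd e', fst e') \<in> sym_rel (T - {e})"
    using assms by (auto simp: sym_rel_def)
  show ?thesis unfolding compC_def using 1 2
    by (auto intro: rtrancl_into_rtrancl)
qed

lemma net_add: "net F (\<lambda>e. f e + g e) v = net F f v + net F g v"
  by (simp add: net_def sum.distrib)

lemma net_scale: "net F (\<lambda>e. c * f e) v = c * net F f v"
  by (simp add: net_def sum_distrib_left right_diff_distrib)

lemma net_diff: "net F (\<lambda>e. f e - g e) v = net F f v - net F g v"
  by (simp add: net_def sum_subtractf)

lemma net_cong: "(\<And>e. e \<in> F \<Longrightarrow> f e = g e) \<Longrightarrow> net F f v = net F g v"
  by (simp add: net_def)

lemma net_split:
  fixes A :: "('v::finite \<times> 'v) set"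
  assumes "A \<inter> B = {}"
  shows "net (A \<union> B) f v = net A f v + net B f v"
proof -
  have 1: "{j. (v, j) \<in> A \<union> B} = {j. (v, j) \<in> A} \<union> {j. (v, j) \<in> B}" by auto
  have 2: "{j. (j, v) \<in> A \<union> B} = {j. (j, v) \<in> A} \<union> {j. (j, v) \<in> B}" by auto
  have 3: "{j. (v, j) \<in> A} \<inter> {j. (v, j) \<in> B} = {}" "{j. (j, v) \<in> A} \<inter> {j. (j, v) \<in> B} = {}"
    using assms by auto
  show ?thesis unfolding net_def 1 2
    by (simp add: sum.union_disjoint[OF _ _ 3(1)] sum.union_disjoint[OF _ _ 3(2)])
qed

lemma net_total:
  fixes F :: "('v::finite \<times> 'v) set"
  shows "(\<Sum>v\<in>UNIV. net F f v) = 0"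
  using net_parts[of "\<lambda>v. 1" F f] by simp

definition Phi :: "('v::finite \<times> 'v) set \<Rightarrow> real^('v \<times> 'v) \<Rightarrow> real^'v" where
  "Phi T h = (\<chi> v. net T (\<lambda>e. h $ e) v)"

lemma Phi_linear:
  fixes T :: "('v::finite \<times> 'v) set"
  shows "linear (Phi T)"
proof (rule linearI)
  fix a c :: "real^('v \<times> 'v)" and k :: real
  show "Phi T (a + c) = Phi T a + Phi T c"
    by (simp add: Phi_def vec_eq_iff net_add)
  show "Phi T (k *\<^sub>R a) = k *\<^sub>R Phi T a"
    by (simp add: Phi_def vec_eq_iff net_scale)
qed

lemma const_on_conn:
  assumes edge: "\<And>e. e \<in> T \<Longrightarrow> z $ fst e = z $ snd e"
    and "(u, v) \<in> (sym_rel T)\<^sup>*"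
  shows "z $ u = z $ v"
  using assms(2)
proof (induction rule: rtrancl_induct)
  case base then show ?case by simp
next
  case (step y w)
  then show ?case using edge by (auto simp: sym_rel_def)
qed

lemma tree_surj:
  fixes T :: "('v::finite \<times> 'v) set" and d :: "real^'v"
  assumes conn: "connected_graph T" and dsum: "(\<Sum>v\<in>UNIV. d $ v) = 0"
  shows "\<exists>h. \<forall>v. net T h v = d $ v"
proof -
  let ?W = "range (Phi T)"
  have sub: "subspace ?W"
    by (rule linear_subspace_image[OF Phi_linear subspace_UNIV])
  then have spW: "span ?W = ?W" by (simp add: span_eq_iff)
  obtain y z where y: "y \<in> span ?W" and z: "\<And>w. w \<in> span ?W \<Longrightarrow> orthogonal z w" and dyz: "d = y + z"
    using orthogonal_subspace_decomp_exists[of "range (Phi T)" d] by blast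
  have zedge: "z $ fst e = z $ snd e" if e: "e \<in> T" for e
  proof -
    have "orthogonal z (Phi T (axis e 1))" using z spW by auto
    then have "0 = z \<bullet> Phi T (axis e 1)" by (simp add: orthogonal_def)
    also have "\<dots> = (\<Sum>v\<in>UNIV. z $ v * net T (\<lambda>e'. axis e 1 $ e') v)"
      by (simp add: inner_vec_def Phi_def)
    also have "\<dots> = (\<Sum>e'\<in>T. axis e 1 $ e' * (z $ fst e' - z $ snd e'))"
      by (rule net_parts)
    also have "\<dots> = (\<Sum>e'\<in>T. if e' = e then z $ fst e' - z $ snd e' else 0)"
      by (rule sum.cong) (auto simp: axis_def)
    also have "\<dots> = z $ fst e - z $ snd e" using e by simp
    finally show ?thesis by simp
  qed
  obtain u0 :: 'v where True by simp
  have zc: "z $ v = z $ u0" for v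
    using const_on_conn[of T z v u0, OF zedge] conn by (auto simp: connected_graph_def)
  obtain h0 where h0: "y = Phi T h0" using y spW by auto
  have ysum: "(\<Sum>v\<in>UNIV. y $ v) = 0"
    using net_total[of T "\<lambda>e. h0 $ e"] by (simp add: h0 Phi_def)
  have "(\<Sum>v\<in>UNIV. z $ v) = 0" using dsum ysum dyz by (simp add: sum.distrib)
  moreover have "(\<Sum>v\<in>UNIV. z $ v) = (\<Sum>v\<in>(UNIV::'v set). z $ u0)" by (intro sum.cong refl zc)
  ultimately have "of_nat CARD('v) * z $ u0 = 0" by simp
  then have "z $ u0 = 0" by simp
  then have "z = 0" using zc by (simp add: vec_eq_iff)
  then have "d = Phi T h0" using dyz h0 by simp
  then show ?thesis by (auto simp: Phi_def vec_eq_iff intro!: exI[of _ "\<lambda>e. h0 $ e"])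
qed

lemma tree_flow_ex1:
  fixes E :: "('v::finite \<times> 'v) set"
  assumes tree: "spanning_tree E T" and bsum: "(\<Sum>i\<in>UNIV. b $ i) = 0"
  shows "\<exists>!f. is_bflow E b f \<and> (\<forall>e\<in>E - T. f e = g e) \<and> (\<forall>e. e \<notin> E \<longrightarrow> f e = 0)"
proof -
  have TE: "T \<subseteq> E" and conn: "connected_graph T" using tree by (auto simp: spanning_tree_def)
  have Esplit: "E = T \<union> (E - T)" using TE by auto
  define d :: "real^'v" where "d = (\<chi> v. b $ v - net (E - T) g v)"
  have "(\<Sum>v\<in>UNIV. d $ v) = 0"
    using bsum net_total[of "E - T" g] by (simp add: d_def sum_subtractf)
  then obtain h where h: "\<And>v. net T h v = d $ v" using tree_surj[OF conn] by blast
  define f where "f = (\<lambda>e. if e \<in> T then h e else if e \<in> E then g e else 0)"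
  have "net E f v = b $ v" for v
  proof -
    have "net E f v = net T f v + net (E - T) f v"
      using net_split[of T "E - T" f v] Esplit by (metis Diff_disjoint)
    also have "net T f v = net T h v" by (rule net_cong) (simp add: f_def)
    also have "net (E - T) f v = net (E - T) g v" by (rule net_cong) (simp add: f_def)
    finally show ?thesis using h by (simp add: d_def)
  qed
  then have ex: "is_bflow E b f \<and> (\<forall>e\<in>E - T. f e = g e) \<and> (\<forall>e. e \<notin> E \<longrightarrow> f e = 0)"
    using TE by (auto simp: bflow_net f_def)
  have uniq: "f1 = f2" if f1: "is_bflow E b f1 \<and> (\<forall>e\<in>E - T. f1 e = g e) \<and> (\<forall>e. e \<notin> E \<longrightarrow> f1 e = 0)"
    and f2: "is_bflow E b f2 \<and> (\<forall>e\<in>E - T. f2 e = g e) \<and> (\<forall>e. e \<notin> E \<longrightarrow> f2 e = 0)" for f1 f2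
  proof
    fix e
    define hh where "hh = (\<lambda>e. f1 e - f2 e)"
    have hnet: "net E hh v = 0" for v
      using f1 f2 by (simp add: hh_def net_diff bflow_net)
    have hoff: "hh e' = 0" if "e' \<notin> T" for e'
      using f1 f2 that unfolding hh_def by (metis DiffI diff_self)
    show "f1 e = f2 e"
    proof (cases "e \<in> T")
      case False then show ?thesis using hoff[of e] by (simp add: hh_def)
    next
      case True
      let ?w = "\<lambda>v. if v \<in> compC T e then 1 else (0::real)"
      have eE: "e \<in> E" using True TE by auto
      have "0 = (\<Sum>v\<in>UNIV. ?w v * net E hh v)" by (simp add: hnet)
      also have "\<dots> = (\<Sum>e'\<in>E. hh e' * (?w (fst e') - ?w (snd e')))" by (rule net_parts)
      also have "\<dots> = hh e * (?w (fst e) - ?w (snd e)) + (\<Sum>e'\<in>E - {e}. hh e' * (?w (fst e') - ?w (snd e')))"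
        using eE by (simp add: sum.remove)
      also have "(\<Sum>e'\<in>E - {e}. hh e' * (?w (fst e') - ?w (snd e'))) = 0"
      proof (rule sum.neutral, rule ballI)
        fix e' assume e': "e' \<in> E - {e}"
        show "hh e' * (?w (fst e') - ?w (snd e')) = 0"
        proof (cases "e' \<in> T")
          case True then show ?thesis using compC_other[of e' T e] e' by auto
        next
          case False then show ?thesis using hoff by simp
        qed
      qed
      also have "?w (fst e) - ?w (snd e) = 1" using compC_fst[of e T] compC_snd[OF tree True] by simp
      finally show ?thesis by (simp add: hh_def)
    qed
  qed
  show ?thesis using ex uniq by blast
qed



lemma tree_flow_prop:
  fixes E :: "('v::finite \<times> 'v) set"
  assumes tree: "spanning_tree E T" and bsum: "(\<Sum>i\<in>UNIV. b $ i) = 0"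
  shows "is_bflow E b (tree_flow E r b T x) \<and>
     (\<forall>e\<in>E - T. tree_flow E r b T x e = (x $ fst e - x $ snd e) / r e) \<and>
     (\<forall>e. e \<notin> E \<longrightarrow> tree_flow E r b T x e = 0)"
  unfolding tree_flow_def
  by (rule theI'[OF tree_flow_ex1[OF tree bsum, of "\<lambda>e. (x $ fst e - x $ snd e) / r e"]])

lemma dualB_expand:
  fixes E :: "('v::finite \<times> 'v) set"
  shows "dualB E r b x = b \<bullet> x - 1/2 * (\<Sum>e\<in>E. (x $ fst e - x $ snd e)^2 / r e)"
  by (simp add: dualB_def lap_form power2_eq_square)

lemma bflow_inner:
  fixes E :: "('v::finite \<times> 'v) set"
  assumes "is_bflow E b f"
  shows "b \<bullet> u = (\<Sum>e\<in>E. f e * (u $ fst e - u $ snd e))"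
proof -
  have "b \<bullet> u = (\<Sum>v\<in>UNIV. u $ v * net E f v)"
    using assms by (simp add: inner_vec_def bflow_net mult.commute)
  also have "\<dots> = (\<Sum>e\<in>E. f e * (u $ fst e - u $ snd e))" by (rule net_parts)
  finally show ?thesis .
qed

lemma gap_identity:
  fixes E :: "('v::finite \<times> 'v) set"
  assumes fl: "is_bflow E b f" and rpos: "\<forall>e\<in>E. r e > 0"
  shows "energy E r f - dualB E r b x = 1/2 * (\<Sum>e\<in>E. r e * (f e - (x $ fst e - x $ snd e) / r e)^2)"
proof -
  have "energy E r f - dualB E r b x = 1/2 * (\<Sum>e\<in>E. r e * (f e)^2) - (\<Sum>e\<in>E. f e * (x $ fst e - x $ snd e))
     + 1/2 * (\<Sum>e\<in>E. (x $ fst e - x $ snd e)^2 / r e)"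
    using bflow_inner[OF fl, of x] by (simp add: energy_def dualB_expand)
  also have "\<dots> = (\<Sum>e\<in>E. 1/2 * (r e * (f e)^2) - f e * (x $ fst e - x $ snd e) + 1/2 * ((x $ fst e - x $ snd e)^2 / r e))"
    by (simp add: sum.distrib sum_subtractf sum_distrib_left)
  also have "\<dots> = (\<Sum>e\<in>E. 1/2 * (r e * (f e - (x $ fst e - x $ snd e) / r e)^2))"
  proof (rule sum.cong[OF refl])
    fix e assume "e \<in> E"
    then have "r e \<noteq> 0" using rpos by auto
    then show "1/2 * (r e * (f e)^2) - f e * (x $ fst e - x $ snd e) + 1/2 * ((x $ fst e - x $ snd e)^2 / r e)
      = 1/2 * (r e * (f e - (x $ fst e - x $ snd e) / r e)^2)"
      by (simp add: field_simps power2_eq_square)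
  qed
  also have "\<dots> = 1/2 * (\<Sum>e\<in>E. r e * (f e - (x $ fst e - x $ snd e) / r e)^2)"
    by (simp add: sum_distrib_left)
  finally show ?thesis .
qed

lemma dualB_shift:
  fixes E :: "('v::finite \<times> 'v) set"
  assumes rpos: "\<forall>e\<in>E. r e > 0"
  shows "dualB E r b (x + a *\<^sub>R u) = dualB E r b x
     + a * (b \<bullet> u - (\<Sum>e\<in>E. (x $ fst e - x $ snd e) / r e * (u $ fst e - u $ snd e)))
     - a^2 / 2 * (\<Sum>e\<in>E. (u $ fst e - u $ snd e)^2 / r e)"
proof -
  have "(\<Sum>e\<in>E. ((x + a *\<^sub>R u) $ fst e - (x + a *\<^sub>R u) $ snd e)^2 / r e)
     = (\<Sum>e\<in>E. (x $ fst e - x $ snd e)^2 / r e + 2 * a * ((x $ fst e - x $ snd e) / r e * (u $ fst e - u $ snd e))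
        + a^2 * ((u $ fst e - u $ snd e)^2 / r e))"
  proof (rule sum.cong[OF refl])
    fix e assume "e \<in> E"
    then have "r e \<noteq> 0" using rpos by auto
    then show "((x + a *\<^sub>R u) $ fst e - (x + a *\<^sub>R u) $ snd e)^2 / r e =
      (x $ fst e - x $ snd e)^2 / r e + 2 * a * ((x $ fst e - x $ snd e) / r e * (u $ fst e - u $ snd e))
        + a^2 * ((u $ fst e - u $ snd e)^2 / r e)"
      by (simp add: field_simps power2_eq_square)
  qed
  then show ?thesis
    by (simp add: dualB_expand sum.distrib sum_distrib_left inner_add_right algebra_simps)
qed

lemma cut_sum:
  fixes E :: "('v::finite \<times> 'v) set"
  assumes u_def: "u = (\<chi> v. if v \<in> C then 1 else (0::real))"
  shows "(\<Sum>e\<in>E. (u $ fst e - u $ snd e)^2 / r e) = (\<Sum>e\<in>cut E C. 1 / r e)"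
proof -
  have "(\<Sum>e\<in>cut E C. 1 / r e) = (\<Sum>e\<in>E. if (fst e \<in> C) \<noteq> (snd e \<in> C) then 1 / r e else 0)"
    unfolding cut_def by (rule sum.inter_filter) simp
  also have "\<dots> = (\<Sum>e\<in>E. (u $ fst e - u $ snd e)^2 / r e)"
    by (rule sum.cong) (auto simp: u_def)
  finally show ?thesis by simp
qed



lemma S_pos:
  fixes E :: "('v::finite \<times> 'v) set" and r :: "'v \<times> 'v \<Rightarrow> real"
  assumes tree: "spanning_tree E T" and rpos: "\<forall>e\<in>E. r e > 0" and e: "e \<in> T"
  shows "(\<Sum>e'\<in>cut E (compC T e). 1 / r e') > 0"
proof -
  have TE: "T \<subseteq> E" using tree by (auto simp: spanning_tree_def)
  have "e \<in> cut E (compC T e)"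
    using e TE compC_fst[of e T] compC_snd[OF tree e] by (auto simp: cut_def)
  moreover have "\<forall>e'\<in>cut E (compC T e). 1 / r e' > 0"
  proof
    fix e' assume "e' \<in> cut E (compC T e)"
    then have "e' \<in> E" by (simp add: cut_def)
    then have "r e' > 0" using rpos by blast
    then show "1 / r e' > 0" by simp
  qed
  ultimately show ?thesis
    by (intro sum_pos2[where i=e]) (auto intro: less_imp_le)
qed

lemma pointwise:
  fixes E :: "('v::finite \<times> 'v) set"
  assumes rpos: "\<forall>e\<in>E. r e > 0"
    and bsum: "(\<Sum>i\<in>UNIV. b $ i) = 0"
    and xstar_max: "\<forall>x. dualB E r b x \<le> dualB E r b xstar"
    and tree: "spanning_tree E T"
  shows "energy E r (tree_flow E r b T x) \<le> dualB E r b x + tau E r T * (dualB E r b xstar - dualB E r b x)"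
proof -
  define f where "f = tree_flow E r b T x"
  define g where "g = (\<lambda>e. (x $ fst e - x $ snd e) / r e)"
  define Bs where "Bs = dualB E r b xstar"
  define Bx where "Bx = dualB E r b x"
  have TE: "T \<subseteq> E" using tree by (auto simp: spanning_tree_def)
  have fp: "is_bflow E b f" "\<forall>e\<in>E - T. f e = g e"
    using tree_flow_prop[OF tree bsum, of r x] by (auto simp: f_def g_def)
  have gap: "energy E r f - Bx = 1/2 * (\<Sum>e\<in>E. r e * (f e - g e)^2)"
    using gap_identity[OF fp(1) rpos, of x] by (simp add: Bx_def g_def)
  have split: "(\<Sum>e\<in>E. r e * (f e - g e)^2) = (\<Sum>e\<in>T. r e * (f e - g e)^2)"
    by (rule sum.mono_neutral_right) (use TE fp(2) in auto)
  have edge: "r e * (f e - g e)^2 \<le> 2 * (r e / Rcut E r (compC T e)) * (Bs - Bx)" if e: "e \<in> T" for e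
  proof -
    define C where "C = compC T e"
    define u where "u = (\<chi> v. if v \<in> C then 1 else (0::real))"
    define S where "S = (\<Sum>e'\<in>cut E C. 1 / r e')"
    define d where "d = (\<lambda>e'. u $ fst e' - u $ snd e')"
    define vC where "vC = b \<bullet> u - (\<Sum>e'\<in>E. g e' * d e')"
    have Spos: "S > 0" using S_pos[OF tree rpos e] by (simp add: S_def C_def)
    have eE: "e \<in> E" using e TE by auto
    have de: "d e = 1" using compC_fst[of e T] compC_snd[OF tree e] by (simp add: d_def u_def C_def)
    have "b \<bullet> u = (\<Sum>e'\<in>E. f e' * d e')" using bflow_inner[OF fp(1)] by (simp add: d_def)
    then have "vC = (\<Sum>e'\<in>E. (f e' - g e') * d e')"
      by (simp add: vC_def sum_subtractf left_diff_distrib)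
    also have "\<dots> = (f e - g e) * d e + (\<Sum>e'\<in>E - {e}. (f e' - g e') * d e')"
      using eE by (simp add: sum.remove)
    also have "(\<Sum>e'\<in>E - {e}. (f e' - g e') * d e') = 0"
    proof (rule sum.neutral, rule ballI)
      fix e' assume e': "e' \<in> E - {e}"
      show "(f e' - g e') * d e' = 0"
      proof (cases "e' \<in> T")
        case True then show ?thesis using compC_other[of e' T e] e' by (auto simp: d_def u_def C_def)
      next
        case False then show ?thesis using fp(2) e' by simp
      qed
    qed
    finally have vC: "vC = f e - g e" using de by simp
    have "dualB E r b (x + (vC / S) *\<^sub>R u) = Bx + (vC / S) * vC - (vC / S)^2 / 2 * S"
      using dualB_shift[OF rpos, of b x "vC / S" u] cut_sum[where u=u and C=C and E=E and r=r] u_def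
      by (simp add: Bx_def vC_def g_def d_def S_def)
    also have "\<dots> = Bx + vC^2 / (2 * S)" using Spos by (simp add: field_simps power2_eq_square)
    finally have "Bx + vC^2 / (2 * S) \<le> Bs" using xstar_max by (metis Bs_def)
    then have "vC^2 \<le> 2 * S * (Bs - Bx)" using Spos by (simp add: field_simps)
    then have "r e * vC^2 \<le> r e * (2 * S * (Bs - Bx))"
      using rpos eE by (intro mult_left_mono) auto
    moreover have "r e / Rcut E r (compC T e) = r e * S" by (simp add: Rcut_def S_def C_def divide_inverse)
    ultimately show ?thesis using vC by (simp add: algebra_simps)
  qed
  have "energy E r f - Bx \<le> 1/2 * (\<Sum>e\<in>T. 2 * (r e / Rcut E r (compC T e)) * (Bs - Bx))"
    unfolding gap split by (intro mult_left_mono sum_mono edge) auto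
  also have "\<dots> = tau E r T * (Bs - Bx)"
    by (simp add: tau_def sum_distrib_right sum_distrib_left)
  finally show ?thesis by (simp add: f_def Bs_def Bx_def)
qed



theorem mainTheorem16:
  fixes E :: "('v::finite \<times> 'v) set"
    and r :: "'v \<times> 'v \<Rightarrow> real"
    and b :: "real^'v"
    and fstar :: "'v \<times> 'v \<Rightarrow> real"
    and xstar :: "real^'v"
    and T :: "('v \<times> 'v) set"
    and M :: "(real^'v) measure"
    and \<epsilon> :: real
  assumes graph: "oriented_graph E" and conn: "connected_graph E"
    and rpos: "\<forall>e\<in>E. r e > 0"
    and bsum: "(\<Sum>i\<in>UNIV. b $ i) = 0"
    and fstar_flow: "is_bflow E b fstar"
    and fstar_min: "\<forall>f. is_bflow E b f \<longrightarrow> energy E r fstar \<le> energy E r f"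
    and xstar_max: "\<forall>x. dualB E r b x \<le> dualB E r b xstar"
    and tree: "spanning_tree E T"
    and prob: "prob_space M" and sets_M: "sets M = sets borel"
    and intB: "integrable M (\<lambda>x. dualB E r b x)"
    and hyp: "(\<integral>x. dualB E r b x \<partial>M) \<ge> (1 - \<epsilon> / tau E r T) * dualB E r b xstar"
  shows "(\<integral>\<^sup>+ x. ennreal (energy E r (tree_flow E r b T x)) \<partial>M)
           \<le> ennreal ((1 + \<epsilon>) * energy E r fstar)"
proof -
  interpret prob_space M by (rule prob)
  define B where "B = dualB E r b"
  define Bs where "Bs = B xstar"
  define tau0 where "tau0 = tau E r T"
  define Es where "Es = energy E r fstar"
  define I where "I = (\<integral>x. B x \<partial>M)"
  have TE: "T \<subseteq> E" using tree by (auto simp: spanning_tree_def)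
  have pw: "energy E r (tree_flow E r b T x) \<le> B x + tau0 * (Bs - B x)" for x
    using pointwise[OF rpos bsum xstar_max tree] by (simp add: B_def Bs_def tau0_def)
  have Ble: "B x \<le> Bs" for x using xstar_max by (simp add: B_def Bs_def)
  have Bs0: "Bs \<ge> 0" using Ble[of 0] by (simp add: B_def dualB_def)
  have enn: "energy E r f \<ge> 0" for f
    unfolding energy_def using rpos by (intro mult_nonneg_nonneg sum_nonneg) (auto intro: less_imp_le)
  have weak: "Bs \<le> Es"
  proof -
    have "Es - Bs = 1/2 * (\<Sum>e\<in>E. r e * (fstar e - (xstar $ fst e - xstar $ snd e) / r e)^2)"
      using gap_identity[OF fstar_flow rpos, of xstar] by (simp add: Es_def Bs_def B_def)
    also have "\<dots> \<ge> 0" using rpos by (intro mult_nonneg_nonneg sum_nonneg) (auto intro: less_imp_le)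
    finally show ?thesis by simp
  qed
  have tpos_term: "r e / Rcut E r (compC T e) > 0" if "e \<in> T" for e
  proof -
    have "r e > 0" using rpos that TE by auto
    moreover have "Rcut E r (compC T e) > 0"
      using S_pos[OF tree rpos that] by (simp add: Rcut_def)
    ultimately show ?thesis by simp
  qed
  have tau_nn: "tau0 \<ge> 0"
    unfolding tau0_def tau_def using tpos_term by (intro sum_nonneg) (auto intro: less_imp_le)
  have intK: "integrable M (\<lambda>x. B x + tau0 * (Bs - B x))"
    using intB by (simp add: B_def)
  have K: "(\<integral>x. B x + tau0 * (Bs - B x) \<partial>M) = I + tau0 * (Bs - I)"
    using intB by (simp add: B_def I_def prob_space)
  have IBs: "I \<le> Bs"
  proof -
    have "I \<le> (\<integral>x. Bs \<partial>M)" unfolding I_def using intB Ble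
      by (intro integral_mono) (auto simp: B_def)
    then show ?thesis by (simp add: prob_space)
  qed
  have "(\<integral>\<^sup>+ x. ennreal (energy E r (tree_flow E r b T x)) \<partial>M)
      \<le> (\<integral>\<^sup>+ x. ennreal (B x + tau0 * (Bs - B x)) \<partial>M)"
    by (intro nn_integral_mono ennreal_leI pw)
  also have "\<dots> = ennreal (I + tau0 * (Bs - I))"
  proof -
    have "AE x in M. 0 \<le> B x + tau0 * (Bs - B x)"
      using pw enn by (auto intro: order_trans)
    then show ?thesis using nn_integral_eq_integral[OF intK] K by simp
  qed
  also have "\<dots> \<le> ennreal ((1 + \<epsilon>) * Es)"
  proof (cases "tau0 = 0")
    case True
    have "T = {}"
    proof (rule ccontr)
      assume "T \<noteq> {}"
      then obtain e where e: "e \<in> T" by auto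
      have "tau0 > 0" unfolding tau0_def tau_def
        using tpos_term e TE by (intro sum_pos2[where i=e]) (auto intro: less_imp_le finite_subset)
      then show False using True by simp
    qed
    then have "connected_graph ({} :: ('v \<times> 'v) set)" using tree by (simp add: spanning_tree_def)
    then have allEq: "u = v" for u v :: 'v by (simp add: connected_graph_def sym_rel_def)
    have "Bs = 0"
    proof -
      have b0: "b = 0"
      proof -
        obtain v0 :: 'v where True by simp
        have u: "UNIV = {v0}" using allEq by auto
        have "b $ v0 = (\<Sum>i\<in>UNIV. b $ i)" by (simp add: u)
        then have "b $ v0 = 0" using bsum by simp
        then show ?thesis using allEq by (simp add: vec_eq_iff) (metis allEq)
      qed
      have "xstar $ fst e - xstar $ snd e = 0" for e :: "'v \<times> 'v" using allEq[of "fst e" "snd e"] by simp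
      then show ?thesis unfolding Bs_def B_def dualB_expand by (simp add: b0)
    qed
    then have "I + tau0 * (Bs - I) \<le> 0" using True IBs by simp
    then have "ennreal (I + tau0 * (Bs - I)) = 0" by (rule ennreal_neg)
    then show ?thesis by simp
  next
    case False
    then have tp: "tau0 > 0" using tau_nn by simp
    have "Bs - I \<le> \<epsilon> / tau0 * Bs" using hyp by (simp add: I_def B_def Bs_def tau0_def algebra_simps)
    then have "tau0 * (Bs - I) \<le> tau0 * (\<epsilon> / tau0 * Bs)" using tp by (intro mult_left_mono) auto
    then have "tau0 * (Bs - I) \<le> \<epsilon> * Bs" using tp by simp
    then have Kle: "I + tau0 * (Bs - I) \<le> (1 + \<epsilon>) * Bs" using IBs by (simp add: algebra_simps)
    show ?thesis
    proof (cases "1 + \<epsilon> \<ge> 0")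
      case True
      then have "(1 + \<epsilon>) * Bs \<le> (1 + \<epsilon>) * Es" using weak by (intro mult_left_mono)
      then show ?thesis using Kle by (intro ennreal_leI) simp
    next
      case False
      then have "(1 + \<epsilon>) * Bs \<le> 0" using Bs0 by (simp add: mult_nonpos_nonneg)
      then have "I + tau0 * (Bs - I) \<le> 0" using Kle by simp
      then have "ennreal (I + tau0 * (Bs - I)) = 0" by (rule ennreal_neg)
    then show ?thesis by simp
    qed
  qed
  finally show ?thesis by (simp add: Es_def)
qed

end
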